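(* Let $E$ be a normed space and $\tau$ a linear topology on $E$ weaker than the norm topology. Then the following are equivalent: (a) $\tau$ equals the norm topology; (b) $0_E$ is $\tau$-separated from $\mathrm{S}_E$; (c) $\overline{\mathrm{B}}_E\not\subset\overline{\mathrm{S}_E}^{\tau}$, where $\overline{\mathrm{S}_E}^{\tau}$ is the $\tau$-closure of $\mathrm{S}_E$.
   Context: $\overline{\mathrm{B}}_E$ is the closed unit ball and $\mathrm{S}_E$ the unit sphere of $E$. $0_E$ is $\tau$-separated from a set $A$ if some $\tau$-neighborhood of $0_E$ is disjoint from $A$. *)

theory Defs
  imports "HOL-Analysis.Analysis"
begin

definition linear_topology :: "'a::real_vector topology \<Rightarrow> bool" where
  "linear_topology T \<longleftrightarrow>
     topspace T = UNIV \<and>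
     continuous_map (prod_topology T T) T (\<lambda>(x, y). x + y) \<and>
     continuous_map (prod_topology euclideanreal T) T (\<lambda>(a, x). a *\<^sub>R x)"

definition weaker_than_norm :: "'a::real_normed_vector topology \<Rightarrow> bool" where
  "weaker_than_norm T \<longleftrightarrow> (\<forall>U. openin T U \<longrightarrow> open U)"

definition separated_from :: "'a topology \<Rightarrow> 'a \<Rightarrow> 'a set \<Rightarrow> bool" where
  "separated_from T x A \<longleftrightarrow>
     (\<exists>N. (\<exists>U. openin T U \<and> x \<in> U \<and> U \<subseteq> N) \<and> N \<inter> A = {})"

end

theory Submission
  imports Defs
begin

lemma lt_cont_aff:
  fixes T :: "'a::real_normed_vector topology"
  assumes "linear_topology T"
  shows "continuous_map T T (\<lambda>z. a *\<^sub>R (z + b))"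
proof -
  have tT: "topspace T = UNIV" and ad: "continuous_map (prod_topology T T) T (\<lambda>(x, y). x + y)"
    and sc: "continuous_map (prod_topology euclideanreal T) T (\<lambda>(a, x). a *\<^sub>R x)"
    using assms unfolding linear_topology_def by auto
  have "continuous_map T (prod_topology T T) (\<lambda>z. (z, b))"
    by (rule continuous_map_pairedI) (auto simp: tT)
  hence "continuous_map T T ((\<lambda>(x, y). x + y) \<circ> (\<lambda>z. (z, b)))"
    by (rule continuous_map_compose[OF _ ad])
  hence c1: "continuous_map T T (\<lambda>z. z + b)" by (simp add: o_def)
  have "continuous_map T (prod_topology euclideanreal T) (\<lambda>z. (a, z + b))"
    by (rule continuous_map_pairedI) (auto simp: c1)
  hence "continuous_map T T ((\<lambda>(a, x). a *\<^sub>R x) \<circ> (\<lambda>z. (a, z + b)))"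
    by (rule continuous_map_compose[OF _ sc])
  thus ?thesis by (simp add: o_def)
qed

lemma lt_open_aff:
  fixes T :: "'a::real_normed_vector topology"
  assumes "linear_topology T" "openin T W"
  shows "openin T {z. a *\<^sub>R (z + b) \<in> W}"
proof -
  have tT: "topspace T = UNIV" using assms unfolding linear_topology_def by auto
  have "openin T {z \<in> topspace T. a *\<^sub>R (z + b) \<in> W}"
    by (rule openin_continuous_map_preimage[OF lt_cont_aff[OF assms(1)] assms(2)])
  thus ?thesis by (simp add: tT)
qed

lemma lemK:
  fixes T :: "'a::real_normed_vector topology"
  assumes lt: "linear_topology T" and wk: "weaker_than_norm T"
    and W: "openin T W" "0 \<in> W" "W \<subseteq> cball 0 R"
  shows "T = euclidean"
proof -
  define R' where "R' = max R 1"
  have R': "R' > 0" "W \<subseteq> cball 0 R'" using W(3) by (auto simp: R'_def)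
  have "openin T Q" if "open Q" for Q
  proof (subst openin_subopen, intro ballI)
    fix x assume "x \<in> Q"
    then obtain e where e: "e > 0" "ball x e \<subseteq> Q" using \<open>open Q\<close> open_contains_ball by blast
    define c where "c = e / (2 * R')"
    have c: "c > 0" using e R' by (simp add: c_def)
    define V where "V = {z. (1/c) *\<^sub>R (z + (- x)) \<in> W}"
    have "openin T V" unfolding V_def by (rule lt_open_aff[OF lt W(1)])
    moreover have "x \<in> V" using W(2) by (simp add: V_def)
    moreover have "V \<subseteq> Q"
    proof
      fix z assume "z \<in> V"
      hence "norm ((1/c) *\<^sub>R (z - x)) \<le> R'" using R' by (auto simp: V_def)
      hence "norm (z - x) / c \<le> R'" using c by simp
      hence "norm (z - x) \<le> c * R'" using c by (simp add: divide_le_eq mult.commute)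
      also have "\<dots> = e/2" using R' by (simp add: c_def)
      finally have "dist x z < e" using e by (simp add: dist_norm norm_minus_commute)
      thus "z \<in> Q" using e by auto
    qed
    ultimately show "\<exists>U. openin T U \<and> x \<in> U \<and> U \<subseteq> Q" by blast
  qed
  thus ?thesis using wk unfolding weaker_than_norm_def
    by (auto simp: topology_eq)
qed

lemma lemL:
  fixes T :: "'a::real_normed_vector topology"
  assumes lt: "linear_topology T" and V: "openin T V" "0 \<in> V"
  shows "\<exists>W. openin T W \<and> 0 \<in> W \<and> (\<forall>a w. \<bar>a\<bar> \<le> 1 \<longrightarrow> w \<in> W \<longrightarrow> a *\<^sub>R w \<in> V)"
proof -
  have tT: "topspace T = UNIV"
    and sc: "continuous_map (prod_topology euclideanreal T) T (\<lambda>(a, x). a *\<^sub>R x)"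
    using lt unfolding linear_topology_def by auto
  have "openin (prod_topology euclideanreal T)
      {p \<in> topspace (prod_topology euclideanreal T). (\<lambda>(a, x). a *\<^sub>R x) p \<in> V}"
    by (rule openin_continuous_map_preimage[OF sc V(1)])
  moreover have "{p \<in> topspace (prod_topology euclideanreal T). (\<lambda>(a, x). a *\<^sub>R x) p \<in> V}
      = {(a, x). a *\<^sub>R x \<in> V}"
    by (auto simp: tT)
  ultimately have P: "openin (prod_topology euclideanreal T) {(a, x). a *\<^sub>R x \<in> V}"
    by simp
  have "(0::real, 0::'a) \<in> {(a, x). a *\<^sub>R x \<in> V}" using V by simp
  then obtain A W' where AW: "openin euclideanreal A" "openin T W'" "0 \<in> A" "0 \<in> W'"
      "A \<times> W' \<subseteq> {(a, x). a *\<^sub>R x \<in> V}"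
    using P[unfolded openin_prod_topology_alt, rule_format] by metis
  have "open A" using AW(1) by simp
  then obtain d where d: "d > 0" "ball 0 d \<subseteq> A" using AW(3) open_contains_ball by blast
  define W where "W = {z. (2/d) *\<^sub>R (z + 0) \<in> W'}"
  have "openin T W" unfolding W_def by (rule lt_open_aff[OF lt AW(2)])
  moreover have "0 \<in> W" using AW(4) by (simp add: W_def)
  moreover have "a *\<^sub>R w \<in> V" if "\<bar>a\<bar> \<le> 1" "w \<in> W" for a w
  proof -
    have "\<bar>a\<bar> * d \<le> 1 * d" using that(1) d(1) by (intro mult_right_mono) auto
    hence "\<bar>a * d / 2\<bar> < d" using d(1) by (simp add: abs_mult)
    hence "a * d / 2 \<in> ball 0 d" by (simp add: dist_norm)
    hence "a * d / 2 \<in> A" using d(2) by blast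
    moreover have "(2/d) *\<^sub>R w \<in> W'" using that(2) by (simp add: W_def)
    ultimately have "(a * d / 2) *\<^sub>R ((2/d) *\<^sub>R w) \<in> V" using AW(5) by blast
    thus ?thesis using d by simp
  qed
  ultimately show ?thesis by blast
qed

lemma sep_get:
  assumes "separated_from T x A"
  shows "\<exists>U. openin T U \<and> x \<in> U \<and> U \<inter> A = {}"
proof -
  obtain N U where "openin T U" "x \<in> U" "U \<subseteq> N" "N \<inter> A = {}"
    using assms unfolding separated_from_def by metis
  thus ?thesis by blast
qed

theorem corollary2p3:
  fixes T :: "'a::real_normed_vector topology"
  assumes "linear_topology T" and "weaker_than_norm T"
  shows "(T = euclidean \<longleftrightarrow> separated_from T 0 (sphere 0 1))
       \<and> (separated_from T 0 (sphere 0 1) \<longleftrightarrow> \<not> (cball 0 1 \<subseteq> T closure_of (sphere 0 1)))"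
proof -
  have tT: "topspace T = UNIV" using assms unfolding linear_topology_def by auto
  have ab: "separated_from T 0 (sphere 0 1)" if "T = euclidean"
  proof -
    have "openin T (ball 0 1)" unfolding that by simp
    moreover have "ball 0 1 \<inter> sphere 0 (1::real) = {}" by auto
    moreover have "(0::'a) \<in> ball 0 1" by simp
    ultimately show ?thesis unfolding separated_from_def by (metis order_refl inf_commute)
  qed
  have ba: "T = euclidean" if sep: "separated_from T 0 (sphere 0 1)"
  proof -
    obtain U where U: "openin T U" "0 \<in> U" "U \<inter> sphere 0 1 = {}"
      using sep_get[OF sep] by blast
    obtain W where W: "openin T W" "0 \<in> W" "\<forall>a w. \<bar>a\<bar> \<le> 1 \<longrightarrow> w \<in> W \<longrightarrow> a *\<^sub>R w \<in> U"
      using lemL[OF assms(1) U(1,2)] by blast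
    have "W \<subseteq> cball 0 1"
    proof
      fix w assume w: "w \<in> W"
      show "w \<in> cball 0 1"
      proof (rule ccontr)
        assume "w \<notin> cball 0 1"
        hence n: "norm w > 1" by simp
        have "\<bar>1 / norm w\<bar> \<le> 1" using n by (simp add: divide_le_eq)
        hence "(1 / norm w) *\<^sub>R w \<in> U" using W(3) w by blast
        moreover have "(1 / norm w) *\<^sub>R w \<in> sphere 0 1" using n by (auto simp: norm_eq_zero)
        ultimately show False using U(3) by blast
      qed
    qed
    thus ?thesis using lemK[OF assms W(1,2)] by blast
  qed
  have bc: "\<not> (cball 0 1 \<subseteq> T closure_of (sphere 0 1))" if sep: "separated_from T 0 (sphere 0 1)"
  proof -
    obtain U where U: "openin T U" "0 \<in> U" "U \<inter> sphere 0 1 = {}"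
      using sep_get[OF sep] by blast
    have "0 \<notin> T closure_of (sphere 0 1)" using U unfolding in_closure_of by blast
    moreover have "(0::'a) \<in> cball 0 1" by simp
    ultimately show ?thesis by blast
  qed
  have cb: "separated_from T 0 (sphere 0 1)" if c: "\<not> (cball 0 1 \<subseteq> T closure_of (sphere 0 1))"
  proof (rule ccontr)
    assume nb: "\<not> separated_from T 0 (sphere 0 1)"
    have "y \<in> T closure_of (sphere 0 1)" if y: "y \<in> cball 0 1" for y
    proof (cases "norm y = 1")
      case True
      thus ?thesis using closure_of_subset[of "sphere 0 1" T] tT by auto
    next
      case False
      hence ny: "norm y < 1" using y by simp
      show ?thesis unfolding in_closure_of
      proof (intro conjI allI impI)
        show "y \<in> topspace T" by (simp add: tT)
        fix N assume N: "y \<in> N \<and> openin T N"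
        define V where "V = {z. 1 *\<^sub>R (z + y) \<in> N}"
        have "openin T V" unfolding V_def by (rule lt_open_aff[OF assms(1)]) (use N in auto)
        moreover have "0 \<in> V" using N by (simp add: V_def)
        ultimately obtain W where W: "openin T W" "0 \<in> W"
            "\<forall>a w. \<bar>a\<bar> \<le> 1 \<longrightarrow> w \<in> W \<longrightarrow> a *\<^sub>R w \<in> V"
          using lemL[OF assms(1)] by blast
        have "\<not> W \<subseteq> cball 0 2"
        proof
          assume "W \<subseteq> cball 0 2"
          hence "T = euclidean" using lemK[OF assms W(1,2)] by blast
          thus False using nb ab by blast
        qed
        then obtain w where w: "w \<in> W" "norm w > 2" by (meson mem_cball_0 not_le subsetI)
        define f where "f = (\<lambda>t::real. norm (y + t *\<^sub>R w))"
        have "continuous_on {0..1} f" unfolding f_def by (intro continuous_intros)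
        moreover have "f 0 \<le> 1" using ny by (simp add: f_def)
        moreover have "1 \<le> f 1"
        proof -
          have "norm w \<le> norm (y + w) + norm y" using norm_triangle_ineq4[of "y + w" y] by simp
          thus ?thesis using w ny by (simp add: f_def)
        qed
        ultimately obtain t where t: "0 \<le> t" "t \<le> 1" "f t = 1"
          using IVT'[of f 0 1 1] by auto
        have "\<bar>t\<bar> \<le> 1" using t by simp
        hence "t *\<^sub>R w \<in> V" using W(3) w by blast
        hence "y + t *\<^sub>R w \<in> N" by (simp add: V_def add.commute)
        moreover have "y + t *\<^sub>R w \<in> sphere 0 1" using t by (simp add: f_def)
        ultimately show "\<exists>z. z \<in> sphere 0 1 \<and> z \<in> N" by blast
      qed
    qed
    thus False using c by blast
  qed
  show ?thesis using ab ba bc cb by blast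
qed

end
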